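(* Let $c>0$ and consider the function $$F(L,L_2)=\frac{L^3L_2(3L+2L_2)}{(2L+L_2)^4}$$ on the set $\{(L,L_2): L>0,\ L_2>0,\ 2L+L_2=c\}$. Then $F$ has a unique maximizer on this set, given by $$L^*=c\Bigl(1-\sqrt{\tfrac{2}{5}}\Bigr),\qquad L_2^*=c\Bigl(2\sqrt{\tfrac{2}{5}}-1\Bigr),$$ so that the optimal ratio is $\dfrac{L_2^*}{L^*}=\dfrac{\sqrt{10}-1}{3}\approx 0.721$.
   Context: This concerns Purcell's three-link swimmer: a planar swimmer made of three rigid segments joined end to end, with two outer links of length $L$ and a central link of length $L_2$, total length $2L+L_2=c$. In the paper, $F(L,L_2)$ multiplied by $\frac{\eta-\xi}{\xi}$ (with $\xi,\eta$ the tangential and normal drag coefficients of Resistive Force Theory) is the $x$-component of the Lie bracket $[\mathbf g_1,\mathbf g_2]$ of the swimmer's control vector fields at the straight configuration, which is the leading-order coefficient of the $x$-displacement produced by a small stroke (closed curve in the joint-angle plane); maximizing $F$ under the fixed total length constraint yields the optimal link-length ratio. *)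

theory Defs
  imports Complex_Main
begin

definition F :: "real \<Rightarrow> real \<Rightarrow> real" where
  "F L L2 = L^3 * L2 * (3*L + 2*L2) / (2*L + L2)^4"

definition feasible :: "real \<Rightarrow> real \<times> real \<Rightarrow> bool" where
  "feasible c p \<longleftrightarrow> fst p > 0 \<and> snd p > 0 \<and> 2 * fst p + snd p = c"

end

theory Submission
  imports Defs
begin

definition g :: "real \<Rightarrow> real" where "g x = x^3 * (1 - 2*x) * (2 - x)"

lemma sbounds: "0.63 < sqrt (2/5::real)" "sqrt (2/5::real) < 0.64"
proof -
  have "0.63 < sqrt (2/5::real)" by (rule real_less_rsqrt) (simp add: power2_eq_square)
  moreover have "sqrt (2/5::real) < sqrt (0.64^2)" by (simp only: real_sqrt_less_iff) (simp add: power2_eq_square)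
  moreover have "sqrt ((0.64::real)^2) = 0.64" by simp
  ultimately show "0.63 < sqrt (2/5::real)" "sqrt (2/5::real) < 0.64" by auto
qed

lemma aeq: "5*(1 - sqrt (2/5::real))^2 - 10*(1 - sqrt (2/5)) + 3 = 0"
proof -
  have "(sqrt (2/5::real))^2 = 2/5" by simp
  thus ?thesis by (simp add: power2_eq_square algebra_simps)
qed

lemma key:
  fixes a x :: real
  assumes h: "5*a^2-10*a+3=0" and "9/25<a" "a<37/100" "0<x" "x<1/2"
  shows "g x \<le> g a" and "g x = g a \<Longrightarrow> x = a"
proof -
  define q where "q = 2*x^3+(4*a-5)*x^2+(6*a^2-10*a+2)*x + 8*a^3-15*a^2+4*a"
  have id0: "g a - g x + (x-a)^2 * q = 2*a^2*(a-x)*(5*a^2-10*a+3)" unfolding g_def q_def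
    by (simp add: power2_eq_square power3_eq_cube algebra_simps)
  have id: "g a - g x = -((x-a)^2 * q)" using id0 h by simp
  have a2: "a^2 = 2*a - 3/5" using h by linarith
  have c1: "6*a^2-10*a+2 < 0" using a2 assms by linarith
  have c2: "8*a^3-15*a^2+4*a < 0"
  proof -
    have "8*a^3 = a*(8*a^2)" by (simp add: power2_eq_square power3_eq_cube)
    have "8*a^3-15*a^2+4*a = a*(8*a^2-15*a+4)" by (simp add: power2_eq_square power3_eq_cube algebra_simps)
    moreover have "8*a^2-15*a+4 < 0" using a2 assms by linarith
    ultimately show ?thesis using assms by (simp add: mult_pos_neg)
  qed
  have c3: "2*x^3 \<le> x^2"
  proof -
    have "(2*x)*x^2 \<le> 1*x^2" using assms by (intro mult_right_mono) auto
    thus ?thesis by (simp add: power2_eq_square power3_eq_cube algebra_simps)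
  qed
  have c4: "(4*a-5)*x^2 \<le> -3*x^2" using assms by (intro mult_right_mono) auto
  have c5: "(6*a^2-10*a+2)*x < 0" using c1 assms by (simp add: mult_neg_pos)
  have qn: "q < 0" unfolding q_def using c2 c3 c4 c5 by (smt (verit) zero_le_power2)
  have "0 \<le> g a - g x" unfolding id using qn by (simp add: mult_nonneg_nonpos)
  thus "g x \<le> g a" by simp
  assume "g x = g a"
  hence "(x-a)^2 * q = 0" using id by simp
  thus "x = a" using qn by simp
qed

lemma Fg: assumes "c > 0" shows "F (c*x) (c*(1-2*x)) = c * g x"
proof -
  have "F (c*x) (c*(1-2*x)) = c^5 * g x / c^4"
    unfolding F_def g_def by (simp add: algebra_simps power_mult_distrib) (simp add: power_def)?
  also have "\<dots> = c * g x" using assms by (simp add: power_def)?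
  finally show ?thesis .
qed

lemma feas_param:
  assumes "c > 0" "feasible c p"
  shows "0 < fst p / c \<and> fst p / c < 1/2 \<and> p = (c*(fst p / c), c*(1 - 2*(fst p / c)))"
proof -
  obtain L L2 where p: "p = (L, L2)" by (cases p)
  have "L > 0" "L2 > 0" "2*L + L2 = c" using assms(2) by (auto simp: feasible_def p)
  thus ?thesis using assms(1) by (auto simp: p field_simps)
qed

theorem mainTheorem1:
  fixes c :: real
  assumes "c > 0"
  shows "{p. feasible c p \<and> (\<forall>q. feasible c q \<longrightarrow> F (fst q) (snd q) \<le> F (fst p) (snd p))}
           = {(c * (1 - sqrt (2/5)), c * (2 * sqrt (2/5) - 1))}
         \<and> (c * (2 * sqrt (2/5) - 1)) / (c * (1 - sqrt (2/5))) = (sqrt 10 - 1) / 3"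
proof
  define a where "a = 1 - sqrt (2/5::real)"
  have ab: "9/25 < a" "a < 37/100" using sbounds unfolding a_def by auto
  have h: "5*a^2-10*a+3=0" using aeq unfolding a_def .
  have pstar: "(c * (1 - sqrt (2/5)), c * (2 * sqrt (2/5) - 1)) = (c*a, c*(1-2*a))"
    unfolding a_def by (simp add: algebra_simps)
  have fs: "feasible c (c*a, c*(1-2*a))" unfolding feasible_def fst_conv snd_conv
  proof (intro conjI)
    show "0 < c*a" using ab assms by simp
    show "0 < c*(1-2*a)" using ab assms by (intro mult_pos_pos) auto
    show "2*(c*a) + c*(1-2*a) = c" by (simp add: right_diff_distrib)
  qed
  have Fs: "F (c*a) (c*(1-2*a)) = c * g a" using Fg[OF assms] .
  have bound: "F (fst q) (snd q) \<le> c * g a \<and> (F (fst q) (snd q) = c * g a \<longrightarrow> q = (c*a, c*(1-2*a)))"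
    if "feasible c q" for q
  proof -
    define x where "x = fst q / c"
    have x: "0 < x" "x < 1/2" "q = (c*x, c*(1-2*x))" using feas_param[OF assms that] unfolding x_def by auto
    have Fq: "F (fst q) (snd q) = c * g x" using Fg[OF assms] x(3) by simp
    have "g x \<le> g a" using key(1)[OF h ab x(1,2)] .
    hence "c * g x \<le> c * g a" using assms by (intro mult_left_mono) auto
    moreover have "x = a" if E: "c * g x = c * g a"
    proof -
      have "g x = g a" using E assms by (metis mult_cancel_left order_less_irrefl)
      thus ?thesis using key(2)[OF h ab x(1,2)] by blast
    qed
    ultimately show ?thesis unfolding Fq using x(3) by blast
  qed
  show "{p. feasible c p \<and> (\<forall>q. feasible c q \<longrightarrow> F (fst q) (snd q) \<le> F (fst p) (snd p))}
           = {(c * (1 - sqrt (2/5)), c * (2 * sqrt (2/5) - 1))}"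
    unfolding pstar
  proof (intro equalityI subsetI)
    fix p assume "p \<in> {p. feasible c p \<and> (\<forall>q. feasible c q \<longrightarrow> F (fst q) (snd q) \<le> F (fst p) (snd p))}"
    hence p: "feasible c p" "\<forall>q. feasible c q \<longrightarrow> F (fst q) (snd q) \<le> F (fst p) (snd p)" by auto
    have "F (fst (c*a, c*(1-2*a))) (snd (c*a, c*(1-2*a))) \<le> F (fst p) (snd p)" using p(2) fs by blast
    hence "c * g a \<le> F (fst p) (snd p)" using Fs by simp
    thus "p \<in> {(c*a, c*(1-2*a))}" using bound[OF p(1)] by auto
  next
    fix p assume "p \<in> {(c*a, c*(1-2*a))}"
    hence pe: "p = (c*a, c*(1-2*a))" by blast
    have "\<forall>q. feasible c q \<longrightarrow> F (fst q) (snd q) \<le> F (fst p) (snd p)"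
      unfolding pe fst_conv snd_conv Fs using bound by blast
    thus "p \<in> {p. feasible c p \<and> (\<forall>q. feasible c q \<longrightarrow> F (fst q) (snd q) \<le> F (fst p) (snd p))}"
      using fs pe by blast
  qed
next
  define s where "s = sqrt (2/5::real)"
  have s2: "s^2 = 2/5" unfolding s_def by simp
  have s10: "sqrt 10 = 5 * s"
  proof -
    have "sqrt 10 = sqrt (25 * (2/5::real))" by simp
    also have "\<dots> = 5 * s" unfolding s_def real_sqrt_mult by simp
    finally show ?thesis .
  qed
  have sb: "s < 0.64" using sbounds s_def by simp
  have ne: "1 - s \<noteq> 0" using sb by simp
  have e: "(2*s - 1) = (5*s - 1)/3 * (1 - s)"
  proof -
    have "(5*s - 1) * (1 - s) = 6*s - 1 - 5*s^2" by (simp add: algebra_simps power2_eq_square)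
    also have "\<dots> = 3*(2*s-1)" using s2 by simp
    finally show ?thesis by simp
  qed
  have "(2*s - 1) / (1 - s) = (5*s - 1)/3"
    using ne e by (simp add: divide_eq_eq)
  thus "(c * (2 * sqrt (2/5) - 1)) / (c * (1 - sqrt (2/5))) = (sqrt 10 - 1) / 3"
    using assms s10 unfolding s_def[symmetric] by simp
qed

end
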